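(* Let $\mathcal{M}$ be either $\mathcal{M}^{gen}$ or $\mathcal{M}^{inj}$, let $\Omega$ be a finite collection of finite metric spaces, and let $\mathfrak{C}=\mathfrak{C}^\Omega$ be the clustering functor on $\mathcal{M}$ represented by $\Omega$. Then $\mathfrak{C}=\mathfrak{R}_1\circ\mathfrak{T}^\Omega$; that is, for every finite metric space $(X,d_X)$, two points $x,x'\in X$ lie in the same block of $\mathfrak{C}^\Omega(X,d_X)$ if and only if there exist $x_0,\ldots,x_k\in X$ with $x_0=x$, $x_k=x'$ and $d_X^\Omega(x_i,x_{i+1})\leq 1$ for all $i$.
   Context: $\mathcal{M}^{gen}$ is the category whose objects are finite metric spaces and whose morphisms are distance non-increasing maps ($d_Y(f(x),f(x'))\leq d_X(x,x')$); $\mathcal{M}^{inj}$ has the same objects and as morphisms the injective distance non-increasing maps. For a collection $\Omega$ of finite metric spaces, $\mathfrak{C}^\Omega$ assigns to a finite metric space $X$ the partition in which $x,x'$ lie in the same block iff there exist $z_0,\ldots,z_k\in X$ with $z_0=x$, $z_k=x'$, spaces $\omega_1,\ldots,\omega_k\in\Omega$, points $\alpha_i,\beta_i\in\omega_i$ and morphisms $f_i\in\mathrm{Mor}_{\mathcal{M}}(\omega_i,X)$ with $f_i(\alpha_i)=z_{i-1}$, $f_i(\beta_i)=z_i$. For $\lambda>0$, $\lambda\cdot\omega$ denotes $(\omega,\lambda d_\omega)$. Define $W_X^\Omega:X\times X\to[0,+\infty]$ by $W_X^\Omega(x,x)=0$ and, for $x\neq x'$, $W_X^\Omega(x,x')=\inf\{\lambda>0:\exists\,\omega\in\Omega,\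 \phi\in\mathrm{Mor}_{\mathcal{M}}(\lambda\cdot\omega,X)\text{ with }\{x,x'\}\subset\mathrm{im}(\phi)\}$ (infimum of the empty set is $+\infty$). Define $d_X^\Omega(x,x')=\min\{\max_i W_X^\Omega(x_i,x_{i+1}):x_0=x,\ldots,x_k=x'\text{ in }X\}$ (the maximal subdominant ultrametric of $W_X^\Omega$); $\mathfrak{T}^\Omega(X,d_X)=(X,d_X^\Omega)$. $\mathfrak{R}_1$ assigns to a (possibly extended) metric space the partition into equivalence classes of chains with consecutive distances $\leq 1$. *)

theory Defs
  imports "HOL-Library.Extended_Real"
begin

definition fin_metric :: "'a set \<Rightarrow> ('a \<Rightarrow> 'a \<Rightarrow> real) \<Rightarrow> bool" where
  "fin_metric S d \<longleftrightarrow> finite S \<and>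
     (\<forall>x\<in>S. \<forall>y\<in>S. d x y \<ge> 0 \<and> (d x y = 0 \<longleftrightarrow> x = y) \<and> d x y = d y x) \<and>
     (\<forall>x\<in>S. \<forall>y\<in>S. \<forall>z\<in>S. d x z \<le> d x y + d y z)"

text \<open>Morphisms of M^gen (inj = False) or M^inj (inj = True): distance non-increasing maps,
  additionally injective in the case of M^inj.\<close>

definition is_mor :: "bool \<Rightarrow> 'b set \<Rightarrow> ('b \<Rightarrow> 'b \<Rightarrow> real) \<Rightarrow> 'a set \<Rightarrow> ('a \<Rightarrow> 'a \<Rightarrow> real)
                      \<Rightarrow> ('b \<Rightarrow> 'a) \<Rightarrow> bool" where
  "is_mor use_inj S dS X dX f \<longleftrightarrow> f ` S \<subseteq> X \<and>
     (\<forall>x\<in>S. \<forall>y\<in>S. dX (f x) (f y) \<le> dS x y) \<and> (use_inj \<longrightarrow> inj_on f S)"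

definition chain_rel :: "'a set \<Rightarrow> ('a \<Rightarrow> 'a \<Rightarrow> bool) \<Rightarrow> 'a \<Rightarrow> 'a \<Rightarrow> bool" where
  "chain_rel X R x x' \<longleftrightarrow> (\<exists>zs. zs \<noteq> [] \<and> hd zs = x \<and> last zs = x' \<and> set zs \<subseteq> X \<and>
     (\<forall>i < length zs - 1. R (zs ! i) (zs ! Suc i)))"

definition clust_same_block :: "bool \<Rightarrow> ('b set \<times> ('b \<Rightarrow> 'b \<Rightarrow> real)) set \<Rightarrow> 'a set
     \<Rightarrow> ('a \<Rightarrow> 'a \<Rightarrow> real) \<Rightarrow> 'a \<Rightarrow> 'a \<Rightarrow> bool" where
  "clust_same_block use_inj \<Omega> X d x x' \<longleftrightarrow> x \<in> X \<and> x' \<in> X \<and>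
     chain_rel X (\<lambda>z z'. \<exists>\<omega>\<in>\<Omega>. \<exists>\<alpha>\<in>fst \<omega>. \<exists>\<beta>\<in>fst \<omega>. \<exists>f.
        is_mor use_inj (fst \<omega>) (snd \<omega>) X d f \<and> f \<alpha> = z \<and> f \<beta> = z') x x'"

text \<open>W^Omega_X, valued in [0, +infinity] (Inf of the empty set is +infinity in ereal).\<close>

definition W_Omega :: "bool \<Rightarrow> ('b set \<times> ('b \<Rightarrow> 'b \<Rightarrow> real)) set \<Rightarrow> 'a set
     \<Rightarrow> ('a \<Rightarrow> 'a \<Rightarrow> real) \<Rightarrow> 'a \<Rightarrow> 'a \<Rightarrow> ereal" where
  "W_Omega use_inj \<Omega> X d x x' = (if x = x' then 0 else
     Inf {ereal lam | lam. lam > 0 \<and> (\<exists>\<omega>\<in>\<Omega>. \<exists>\<phi>.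
        is_mor use_inj (fst \<omega>) (\<lambda>a b. lam * snd \<omega> a b) X d \<phi> \<and> x \<in> \<phi> ` fst \<omega> \<and> x' \<in> \<phi> ` fst \<omega>)})"

text \<open>d^Omega_X: maximal subdominant ultrametric of W (min over chains of max of W along the chain;
  a chain of length 0 gives 0).\<close>

definition d_Omega :: "bool \<Rightarrow> ('b set \<times> ('b \<Rightarrow> 'b \<Rightarrow> real)) set \<Rightarrow> 'a set
     \<Rightarrow> ('a \<Rightarrow> 'a \<Rightarrow> real) \<Rightarrow> 'a \<Rightarrow> 'a \<Rightarrow> ereal" where
  "d_Omega use_inj \<Omega> X d x x' = Inf {Max (insert 0 {W_Omega use_inj \<Omega> X d (zs ! i) (zs ! Suc i) | i. i < length zs - 1})
       | zs. zs \<noteq> [] \<and> hd zs = x \<and> last zs = x' \<and> set zs \<subseteq> X}"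

end

theory Submission
  imports Defs
begin

definition Cstep where
  "Cstep use_inj \<Omega> X d z z' \<longleftrightarrow> (\<exists>\<omega>\<in>\<Omega>. \<exists>\<alpha>\<in>fst \<omega>. \<exists>\<beta>\<in>fst \<omega>. \<exists>f.
        is_mor use_inj (fst \<omega>) (snd \<omega>) X d f \<and> f \<alpha> = z \<and> f \<beta> = z')"

definition RelX where "RelX X R = {(a,b). a\<in>X \<and> b\<in>X \<and> R a b}"

lemma clust_eq:
  "clust_same_block u \<Omega> X d x x' \<longleftrightarrow> x\<in>X \<and> x'\<in>X \<and> chain_rel X (Cstep u \<Omega> X d) x x'"
  unfolding clust_same_block_def Cstep_def[abs_def] by simp

lemma list_chain:
  "\<forall>x. zs \<noteq> [] \<longrightarrow> hd zs = x \<longrightarrow> set zs \<subseteq> X \<longrightarrow> (\<forall>i < length zs - 1. R (zs ! i) (zs ! Suc i))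
     \<longrightarrow> (\<forall>a b. a\<in>X \<longrightarrow> b\<in>X \<longrightarrow> R a b \<longrightarrow> (a,b) \<in> S\<^sup>*) \<longrightarrow> (x, last zs) \<in> S\<^sup>*"
proof (induction zs)
  case Nil
  then show ?case by simp
next
  case (Cons a zs)
  show ?case
  proof (intro allI impI)
    fix x
    assume h: "a # zs \<noteq> []" "hd (a # zs) = x" "set (a # zs) \<subseteq> X"
      "\<forall>i<length (a # zs) - 1. R ((a # zs) ! i) ((a # zs) ! Suc i)"
      "\<forall>a b. a \<in> X \<longrightarrow> b \<in> X \<longrightarrow> R a b \<longrightarrow> (a, b) \<in> S\<^sup>*"
    show "(x, last (a # zs)) \<in> S\<^sup>*"
    proof (cases "zs = []")
      case True
      then show ?thesis using h by simp
    next
      case False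
      have r: "R a (hd zs)" using h(4) False by (cases zs) auto
      have "(a, hd zs) \<in> S\<^sup>*" using h(5) r h(3) False by (cases zs) auto
      moreover have "(hd zs, last zs) \<in> S\<^sup>*"
      proof -
        have "\<forall>i<length zs - 1. R (zs ! i) (zs ! Suc i)"
        proof (intro allI impI)
          fix i assume "i < length zs - 1"
          then show "R (zs ! i) (zs ! Suc i)" using h(4)[rule_format, of "Suc i"] by simp
        qed
        then show ?thesis using Cons.IH False h by auto
      qed
      ultimately show ?thesis using h False by auto
    qed
  qed
qed

lemma chain_rtrancl:
  assumes "chain_rel X R x x'" "\<And>a b. a\<in>X \<Longrightarrow> b\<in>X \<Longrightarrow> R a b \<Longrightarrow> (a,b) \<in> S\<^sup>*"
  shows "(x,x') \<in> S\<^sup>*"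
proof -
  obtain zs where z: "zs \<noteq> []" "hd zs = x" "last zs = x'" "set zs \<subseteq> X"
     "\<forall>i < length zs - 1. R (zs ! i) (zs ! Suc i)"
    using assms(1) unfolding chain_rel_def by blast
  show ?thesis using list_chain[of zs X R S] z assms(2) by auto
qed

lemma rtrancl_chain:
  assumes "(x,x') \<in> (RelX X R)\<^sup>*" "x' \<in> X"
  shows "chain_rel X R x x'"
  using assms(1)
proof (induction rule: converse_rtrancl_induct)
  case base
  then show ?case unfolding chain_rel_def using assms(2) by (intro exI[of _ "[x']"]) auto
next
  case (step y z)
  then obtain zs where z: "zs \<noteq> []" "hd zs = z" "last zs = x'" "set zs \<subseteq> X"
     "\<forall>i < length zs - 1. R (zs ! i) (zs ! Suc i)"
    unfolding chain_rel_def by blast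
  have yz: "y \<in> X" "R y z" using step(1) unfolding RelX_def by auto
  show ?case unfolding chain_rel_def
  proof (intro exI[of _ "y # zs"] conjI allI impI)
    fix i assume i: "i < length (y # zs) - 1"
    show "R ((y # zs) ! i) ((y # zs) ! Suc i)"
    proof (cases i)
      case 0
      then show ?thesis using yz z by (cases zs) auto
    next
      case (Suc j)
      then show ?thesis using z(5) i by auto
    qed
  qed (use z yz in auto)
qed

lemma C_W:
  assumes "Cstep u \<Omega> X d a b"
  shows "W_Omega u \<Omega> X d a b \<le> 1"
proof (cases "a = b")
  case True
  then show ?thesis by (simp add: W_Omega_def)
next
  case False
  obtain \<omega> \<alpha> \<beta> f where o: "\<omega>\<in>\<Omega>" "\<alpha>\<in>fst \<omega>" "\<beta>\<in>fst \<omega>"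
     "is_mor u (fst \<omega>) (snd \<omega>) X d f" "f \<alpha> = a" "f \<beta> = b"
    using assms unfolding Cstep_def by blast
  have "ereal 1 \<in> {ereal lam | lam. lam > 0 \<and> (\<exists>\<omega>\<in>\<Omega>. \<exists>\<phi>.
        is_mor u (fst \<omega>) (\<lambda>a b. lam * snd \<omega> a b) X d \<phi> \<and> a \<in> \<phi> ` fst \<omega> \<and> b \<in> \<phi> ` fst \<omega>)}"
    using o by (intro CollectI exI[of _ 1]) (auto intro!: bexI[of _ \<omega>] exI[of _ f])
  then show ?thesis using False unfolding W_Omega_def by (simp add: Inf_lower one_ereal_def)
qed

lemma W_D:
  assumes "W_Omega u \<Omega> X d a b \<le> 1" "a\<in>X" "b\<in>X"
  shows "d_Omega u \<Omega> X d a b \<le> 1"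
proof -
  have s: "{W_Omega u \<Omega> X d ([a,b] ! i) ([a,b] ! Suc i) | i. i < length [a,b] - 1} = {W_Omega u \<Omega> X d a b}"
    by auto
  have "Max (insert 0 {W_Omega u \<Omega> X d ([a,b] ! i) ([a,b] ! Suc i) | i. i < length [a,b] - 1}) \<in>
    {Max (insert 0 {W_Omega u \<Omega> X d (zs ! i) (zs ! Suc i) | i. i < length zs - 1})
       | zs. zs \<noteq> [] \<and> hd zs = a \<and> last zs = b \<and> set zs \<subseteq> X}"
    by (rule CollectI, rule exI[of _ "[a,b]"]) (use assms in auto)
  then have "d_Omega u \<Omega> X d a b \<le> Max (insert 0 {W_Omega u \<Omega> X d a b})"
    unfolding d_Omega_def s by (rule Inf_lower)
  also have "\<dots> \<le> 1" using assms(1) by simp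
  finally show ?thesis .
qed

lemma D_chain:
  assumes "d_Omega u \<Omega> X d a b \<le> 1" "a\<in>X" "b\<in>X" "finite X"
  shows "chain_rel X (\<lambda>p q. W_Omega u \<Omega> X d p q \<le> 1) a b"
proof -
  define W where "W = W_Omega u \<Omega> X d"
  define A where "A = (\<lambda>zs. {W (zs ! i) (zs ! Suc i) | i. i < length zs - 1})"
  define S where "S = {Max (insert 0 (A zs)) | zs. zs \<noteq> [] \<and> hd zs = a \<and> last zs = b \<and> set zs \<subseteq> X}"
  have finA: "finite (A zs)" for zs
  proof -
    have "A zs = (\<lambda>i. W (zs ! i) (zs ! Suc i)) ` {..<length zs - 1}" unfolding A_def by auto
    then show ?thesis by simp
  qed
  have AX: "set zs \<subseteq> X \<Longrightarrow> A zs \<subseteq> (\<lambda>(p,q). W p q) ` (X \<times> X)" for zs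
  proof
    fix y assume "set zs \<subseteq> X" "y \<in> A zs"
    then obtain i where "i < length zs - 1" "y = W (zs ! i) (zs ! Suc i)" unfolding A_def by auto
    moreover have "zs ! i \<in> X" "zs ! Suc i \<in> X" using \<open>set zs \<subseteq> X\<close> calculation(1)
      by (auto intro!: subsetD[OF \<open>set zs \<subseteq> X\<close>] nth_mem)
    ultimately show "y \<in> (\<lambda>(p,q). W p q) ` (X \<times> X)" by auto
  qed
  have "S \<subseteq> insert 0 ((\<lambda>(p,q). W p q) ` (X \<times> X))"
  proof
    fix y assume "y \<in> S"
    then obtain zs where zs: "set zs \<subseteq> X" "y = Max (insert 0 (A zs))" unfolding S_def by auto
    have "y \<in> insert 0 (A zs)" using zs(2) Max_in[of "insert 0 (A zs)"] finA by auto
    then show "y \<in> insert 0 ((\<lambda>(p,q). W p q) ` (X \<times> X))" using AX[OF zs(1)] by auto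
  qed
  then have finS: "finite S" by (rule finite_subset) (use assms(4) in auto)
  have "Max (insert 0 (A [a,b])) \<in> S" unfolding S_def using assms by auto
  then have neS: "S \<noteq> {}" by auto
  have "Inf S \<in> S" using Min_Inf[OF finS neS] Min_in[OF finS neS] by simp
  moreover have "Inf S \<le> 1" using assms(1) unfolding d_Omega_def S_def A_def W_def .
  ultimately obtain zs where zs: "zs \<noteq> []" "hd zs = a" "last zs = b" "set zs \<subseteq> X"
    "Max (insert 0 (A zs)) \<le> 1" unfolding S_def by auto
  show ?thesis unfolding chain_rel_def
  proof (intro exI[of _ zs] conjI allI impI)
    fix i assume "i < length zs - 1"
    then have "W (zs ! i) (zs ! Suc i) \<in> insert 0 (A zs)" unfolding A_def by auto
    then have "W (zs ! i) (zs ! Suc i) \<le> Max (insert 0 (A zs))" using finA by simp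
    then show "W_Omega u \<Omega> X d (zs ! i) (zs ! Suc i) \<le> 1" using zs(5) W_def by simp
  qed (use zs in auto)
qed


lemma W_C:
  assumes "W_Omega u \<Omega> X d a b \<le> 1" "a\<in>X" "b\<in>X"
    "finite \<Omega>" "\<forall>\<omega>\<in>\<Omega>. fin_metric (fst \<omega>) (snd \<omega>)" "fin_metric X d"
  shows "(a,b) \<in> (RelX X (Cstep u \<Omega> X d))\<^sup>*"
proof (cases "a = b")
  case True
  then show ?thesis by simp
next
  case False
  have "Cstep u \<Omega> X d a b"
  proof (rule ccontr)
    assume nC: "\<not> Cstep u \<Omega> X d a b"
    define D where "D = {(u',v,\<omega>,p,q). u'\<in>X \<and> v\<in>X \<and> \<omega>\<in>\<Omega> \<and> p\<in>fst \<omega> \<and> q\<in>fst \<omega> \<and>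
        0 < snd \<omega> p q \<and> snd \<omega> p q < d u' v}"
    define F where "F = (\<lambda>(u',v,\<omega>,p,q). d u' v / snd \<omega> p q) ` D"
    have finX: "finite X" using assms(6) unfolding fin_metric_def by auto
    have finO: "\<forall>\<omega>\<in>\<Omega>. finite (fst \<omega>)" using assms(5) unfolding fin_metric_def by auto
    have "D \<subseteq> X \<times> X \<times> (SIGMA \<omega>:\<Omega>. fst \<omega> \<times> fst \<omega>)" unfolding D_def by auto
    moreover have "finite (X \<times> X \<times> (SIGMA \<omega>:\<Omega>. fst \<omega> \<times> fst \<omega>))"
      using finX finO assms(4) by (intro finite_cartesian_product finite_SigmaI) auto
    ultimately have "finite D" by (rule finite_subset)
    then have finF: "finite F" unfolding F_def by simp
    define m where "m = Min (insert 2 F)"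
    have Fgt: "y \<in> F \<Longrightarrow> y > 1" for y
      unfolding F_def D_def by auto
    have m1: "m > 1" unfolding m_def using finF Fgt by simp
    have mle: "y \<in> F \<Longrightarrow> m \<le> y" for y unfolding m_def using finF by simp
    have "ereal m \<le> W_Omega u \<Omega> X d a b"
      unfolding W_Omega_def using False
    proof (simp, intro Inf_greatest)
      fix t assume "t \<in> {ereal lam | lam. lam > 0 \<and> (\<exists>\<omega>\<in>\<Omega>. \<exists>\<phi>.
        is_mor u (fst \<omega>) (\<lambda>a b. lam * snd \<omega> a b) X d \<phi> \<and> a \<in> \<phi> ` fst \<omega> \<and> b \<in> \<phi> ` fst \<omega>)}"
      then obtain lam \<omega> \<phi> where t: "t = ereal lam" "lam > 0" "\<omega>\<in>\<Omega>"
        "is_mor u (fst \<omega>) (\<lambda>a b. lam * snd \<omega> a b) X d \<phi>" "a \<in> \<phi> ` fst \<omega>" "b \<in> \<phi> ` fst \<omega>"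
        by blast
      have "\<not> is_mor u (fst \<omega>) (snd \<omega>) X d \<phi>"
        using nC t(3,5,6) unfolding Cstep_def by blast
      then obtain p q where pq: "p \<in> fst \<omega>" "q \<in> fst \<omega>" "d (\<phi> p) (\<phi> q) > snd \<omega> p q"
        using t(4) unfolding is_mor_def by force
      have s0: "snd \<omega> p q \<ge> 0" using assms(5) t(3) pq unfolding fin_metric_def by auto
      have le: "d (\<phi> p) (\<phi> q) \<le> lam * snd \<omega> p q" using t(4) pq unfolding is_mor_def by auto
      have img: "\<phi> p \<in> X" "\<phi> q \<in> X" using t(4) pq unfolding is_mor_def by auto
      have spos: "snd \<omega> p q > 0"
      proof (rule ccontr)
        assume "\<not> snd \<omega> p q > 0"
        then have "snd \<omega> p q = 0" using s0 by simp
        then show False using le pq(3) by simp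
      qed
      have inF: "d (\<phi> p) (\<phi> q) / snd \<omega> p q \<in> F"
        unfolding F_def D_def
        by (rule image_eqI[of _ _ "(\<phi> p, \<phi> q, \<omega>, p, q)"]) (use img t(3) pq spos in auto)
      have "d (\<phi> p) (\<phi> q) / snd \<omega> p q \<le> lam" using le spos by (simp add: divide_le_eq)
      then have "m \<le> lam" using mle[OF inF] by simp
      then show "ereal m \<le> t" using t(1) by simp
    qed
    then show False using assms(1) m1 by (metis ereal_less_eq(3) linorder_not_less one_ereal_def order_trans)
  qed
  then show ?thesis using assms(2,3) unfolding RelX_def by auto
qed

theorem mainTheorem4:
  fixes use_inj :: bool
    and \<Omega> :: "('b set \<times> ('b \<Rightarrow> 'b \<Rightarrow> real)) set"
    and X :: "'a set" and d :: "'a \<Rightarrow> 'a \<Rightarrow> real"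
  assumes "finite \<Omega>"
    and "\<forall>\<omega>\<in>\<Omega>. fin_metric (fst \<omega>) (snd \<omega>)"
    and "fin_metric X d"
    and "x \<in> X" and "x' \<in> X"
  shows "clust_same_block use_inj \<Omega> X d x x' \<longleftrightarrow>
         chain_rel X (\<lambda>z z'. d_Omega use_inj \<Omega> X d z z' \<le> 1) x x'"
proof
  assume "clust_same_block use_inj \<Omega> X d x x'"
  then have c: "chain_rel X (Cstep use_inj \<Omega> X d) x x'" by (simp only: clust_eq)
  have "(x,x') \<in> (RelX X (\<lambda>z z'. d_Omega use_inj \<Omega> X d z z' \<le> 1))\<^sup>*"
  proof (rule chain_rtrancl[OF c])
    fix a b assume "a\<in>X" "b\<in>X" "Cstep use_inj \<Omega> X d a b"
    then have "d_Omega use_inj \<Omega> X d a b \<le> 1" by (intro W_D C_W)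
    then show "(a,b) \<in> (RelX X (\<lambda>z z'. d_Omega use_inj \<Omega> X d z z' \<le> 1))\<^sup>*"
      using \<open>a\<in>X\<close> \<open>b\<in>X\<close> unfolding RelX_def by auto
  qed
  then show "chain_rel X (\<lambda>z z'. d_Omega use_inj \<Omega> X d z z' \<le> 1) x x'"
    using assms(5) by (rule rtrancl_chain)
next
  assume c: "chain_rel X (\<lambda>z z'. d_Omega use_inj \<Omega> X d z z' \<le> 1) x x'"
  have finX: "finite X" using assms(3) unfolding fin_metric_def by (elim conjE)
  have r: "(x,x') \<in> (RelX X (Cstep use_inj \<Omega> X d))\<^sup>*"
  proof (rule chain_rtrancl[OF c])
    fix a b assume ab: "a\<in>X" "b\<in>X" "d_Omega use_inj \<Omega> X d a b \<le> 1"
    then have "chain_rel X (\<lambda>p q. W_Omega use_inj \<Omega> X d p q \<le> 1) a b"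
      using ab finX by (intro D_chain)
    then show "(a,b) \<in> (RelX X (Cstep use_inj \<Omega> X d))\<^sup>*"
      by (rule chain_rtrancl) (rule W_C, assumption+, rule assms(1), rule assms(2), rule assms(3))
  qed
  have "chain_rel X (Cstep use_inj \<Omega> X d) x x'" using r assms(5) by (rule rtrancl_chain)
  then show "clust_same_block use_inj \<Omega> X d x x'"
    using assms(4,5) by (simp only: clust_eq)
qed

end
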